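(* Let $G$ be a just infinite profinite group, and let $K$ and $L$ be normal subgroups of $G$ with $L < K$ such that $K/L$ is a chief factor of $G$. Then there is a critical pair $(A, A\cap L)$ in $G$ with $AL = K$. In particular $K/L \cong A/(A\cap L)$ and $C_G(K/L) = C_G(A/(A\cap L))$.
   Context: All groups are profinite, subgroups closed. A profinite group is \emph{just infinite} if it is infinite and every non-trivial closed normal subgroup has finite index. For normal subgroups $B<A$, $A/B$ is a \emph{chief factor} of $G$ if there is no normal subgroup of $G$ strictly between $B$ and $A$, and $(A,B)$ is a \emph{critical pair} if $B$ contains every normal subgroup of $G$ properly contained in $A$. $C_G(A/B) = \{g \in G: [g,a]\in B \ \forall a \in A\}$. *)

theory Defs
  imports "HOL-Analysis.Analysis" "HOL-Algebra.Algebra"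
begin

definition profinite_group :: "('a, 'b) monoid_scheme \<Rightarrow> 'a topology \<Rightarrow> bool" where
  "profinite_group G T \<longleftrightarrow> group G \<and> topspace T = carrier G
     \<and> continuous_map (prod_topology T T) T (\<lambda>p. fst p \<otimes>\<^bsub>G\<^esub> snd p)
     \<and> continuous_map T T (\<lambda>x. inv\<^bsub>G\<^esub> x)
     \<and> compact_space T \<and> Hausdorff_space T
     \<and> (\<forall>x y. connected_component_of T x y \<longrightarrow> x = y)"

text \<open>Closed normal subgroups (all subgroups are tacitly closed).\<close>
definition closed_normal :: "('a, 'b) monoid_scheme \<Rightarrow> 'a topology \<Rightarrow> 'a set \<Rightarrow> bool" where
  "closed_normal G T N \<longleftrightarrow> N \<lhd> G \<and> closedin T N"

definition just_infinite :: "('a, 'b) monoid_scheme \<Rightarrow> 'a topology \<Rightarrow> bool" where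
  "just_infinite G T \<longleftrightarrow> infinite (carrier G) \<and>
     (\<forall>N. closed_normal G T N \<and> N \<noteq> {\<one>\<^bsub>G\<^esub>} \<longrightarrow> finite (rcosets\<^bsub>G\<^esub> N))"

definition chief_factor :: "('a, 'b) monoid_scheme \<Rightarrow> 'a topology \<Rightarrow> 'a set \<Rightarrow> 'a set \<Rightarrow> bool" where
  "chief_factor G T K L \<longleftrightarrow> closed_normal G T K \<and> closed_normal G T L \<and> L \<subset> K \<and>
     \<not> (\<exists>N. closed_normal G T N \<and> L \<subset> N \<and> N \<subset> K)"

definition critical_pair :: "('a, 'b) monoid_scheme \<Rightarrow> 'a topology \<Rightarrow> 'a set \<Rightarrow> 'a set \<Rightarrow> bool" where
  "critical_pair G T A B \<longleftrightarrow> closed_normal G T A \<and> closed_normal G T B \<and> B \<subset> A \<and>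
     (\<forall>N. closed_normal G T N \<and> N \<subset> A \<longrightarrow> N \<subseteq> B)"

definition centralizer_factor :: "('a, 'b) monoid_scheme \<Rightarrow> 'a set \<Rightarrow> 'a set \<Rightarrow> 'a set" where
  "centralizer_factor G A B = {g \<in> carrier G. \<forall>a \<in> A.
     inv\<^bsub>G\<^esub> g \<otimes>\<^bsub>G\<^esub> inv\<^bsub>G\<^esub> a \<otimes>\<^bsub>G\<^esub> g \<otimes>\<^bsub>G\<^esub> a \<in> B}"

end

theory Submission
  imports Defs
begin

lemma closed_set_mult:
  assumes "profinite_group G T" "closedin T N" "closedin T L"
  shows "closedin T (N <#>\<^bsub>G\<^esub> L)"
proof -
  have eq: "N <#>\<^bsub>G\<^esub> L = (\<lambda>p. fst p \<otimes>\<^bsub>G\<^esub> snd p) ` (N \<times> L)"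
  proof
    show "N <#>\<^bsub>G\<^esub> L \<subseteq> (\<lambda>p. fst p \<otimes>\<^bsub>G\<^esub> snd p) ` (N \<times> L)"
    proof
      fix z assume "z \<in> N <#>\<^bsub>G\<^esub> L"
      then obtain h k where hk: "h \<in> N" "k \<in> L" "z = h \<otimes>\<^bsub>G\<^esub> k" unfolding set_mult_def by blast
      then show "z \<in> (\<lambda>p. fst p \<otimes>\<^bsub>G\<^esub> snd p) ` (N \<times> L)"
        by (intro image_eqI[of _ _ "(h,k)"]) auto
    qed
  next
    show "(\<lambda>p. fst p \<otimes>\<^bsub>G\<^esub> snd p) ` (N \<times> L) \<subseteq> N <#>\<^bsub>G\<^esub> L"
    proof
      fix z assume "z \<in> (\<lambda>p. fst p \<otimes>\<^bsub>G\<^esub> snd p) ` (N \<times> L)"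
      then obtain p where "p \<in> N \<times> L" "z = fst p \<otimes>\<^bsub>G\<^esub> snd p" by blast
      then show "z \<in> N <#>\<^bsub>G\<^esub> L" unfolding set_mult_def by (cases p) auto
    qed
  qed
  have cs: "compact_space T" "Hausdorff_space T"
    and cm: "continuous_map (prod_topology T T) T (\<lambda>p. fst p \<otimes>\<^bsub>G\<^esub> snd p)"
    using assms(1) unfolding profinite_group_def by auto
  have "compactin T N" "compactin T L"
    using assms(2,3) cs closedin_compact_space by blast+
  then have "compactin (prod_topology T T) (N \<times> L)"
    by (simp add: compactin_Times)
  then have "compactin T ((\<lambda>p. fst p \<otimes>\<^bsub>G\<^esub> snd p) ` (N \<times> L))"
    using image_compactin cm by blast
  then show ?thesis using eq compactin_imp_closedin cs by metis
qed
lemma (in group) set_mult_sub_id: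
  assumes "subgroup A G" "subgroup N G" "N \<subseteq> A"
  shows "A <#> N = A"
proof
  show "A <#> N \<subseteq> A" unfolding set_mult_def
    using assms subgroup.m_closed[OF assms(1)] by blast
  show "A \<subseteq> A <#> N" unfolding set_mult_def
  proof
    fix x assume x: "x \<in> A"
    then have "x = x \<otimes> \<one>" using assms(1) subgroup.mem_carrier by force
    moreover have "\<one> \<in> N" using assms(2) subgroup.one_closed by blast
    ultimately show "x \<in> (\<Union>h\<in>A. \<Union>k\<in>N. {h \<otimes> k})" using x by blast
  qed
qed

lemma (in group) index_strict:
  assumes "subgroup A G" "subgroup N G" "N \<subset> A" "finite (rcosets N)"
  shows "card (rcosets A) < card (rcosets N)"
proof -
  define f where "f Y = A <#> Y" for Y
  have AN: "A <#> N = A" using set_mult_sub_id assms by blast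
  have fx: "f (N #> x) = A #> x" if "x \<in> carrier G" for x
  proof -
    have "A <#> (N #> x) = (A <#> N) #> x"
      using setmult_rcos_assoc[of A N x] that assms(1,2) subgroup.subset by blast
    then show ?thesis unfolding f_def using AN by simp
  qed
  have img: "f ` (rcosets N) = rcosets A"
  proof
    show "f ` (rcosets N) \<subseteq> rcosets A"
    proof
      fix Y assume "Y \<in> f ` (rcosets N)"
      then obtain x where x: "x \<in> carrier G" "Y = f (N #> x)" unfolding RCOSETS_def by blast
      then have "Y = A #> x" using fx[OF x(1)] by simp
      then show "Y \<in> rcosets A" unfolding RCOSETS_def using x(1) by blast
    qed
    show "rcosets A \<subseteq> f ` (rcosets N)"
    proof
      fix Y assume "Y \<in> rcosets A"
      then obtain x where x: "x \<in> carrier G" "Y = A #> x" unfolding RCOSETS_def by blast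
      then have "Y = f (N #> x)" using fx[OF x(1)] by simp
      moreover have "N #> x \<in> rcosets N" unfolding RCOSETS_def using x(1) by blast
      ultimately show "Y \<in> f ` (rcosets N)" by blast
    qed
  qed
  obtain a where a: "a \<in> A" "a \<notin> N" using assms(3) by blast
  have ac: "a \<in> carrier G" using subgroup.mem_carrier[OF assms(1) a(1)] .
  have "\<one> \<otimes> a = a" using ac by simp
  then have "a \<in> N #> a" unfolding r_coset_def using subgroup.one_closed[OF assms(2)] by blast
  moreover have "N #> \<one> = N" using coset_mult_one[of N] assms(2) subgroup.subset by blast
  ultimately have neq: "N #> a \<noteq> N #> \<one>" using a by auto
  have "A #> a = A" using coset_join2[OF ac assms(1) a(1)] .
  moreover have "A #> \<one> = A" using coset_mult_one[of A] assms(1) subgroup.subset by blast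
  moreover have "f (N #> a) = A #> a" "f (N #> \<one>) = A #> \<one>" using fx[OF ac] fx[OF one_closed] by simp_all
  ultimately have feq: "f (N #> a) = f (N #> \<one>)" by simp
  have "N #> a \<in> rcosets N" "N #> \<one> \<in> rcosets N" unfolding RCOSETS_def using ac one_closed by blast+
  then have "\<not> inj_on f (rcosets N)" using neq feq unfolding inj_on_def by blast
  then have "card (f ` (rcosets N)) \<noteq> card (rcosets N)" using inj_on_iff_eq_card assms(4) by blast
  moreover have "card (f ` (rcosets N)) \<le> card (rcosets N)" using card_image_le assms(4) by blast
  ultimately show ?thesis using img by simp
qed

lemma (in group) chain_Inter_P:
  assumes prof: "profinite_group G T" and cL: "closed_normal G T L"
    and ne: "\<D> \<noteq> {}" and D: "\<And>D. D \<in> \<D> \<Longrightarrow> closed_normal G T D \<and> D <#> L = K"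
    and ch: "\<And>D E. D \<in> \<D> \<Longrightarrow> E \<in> \<D> \<Longrightarrow> D \<subseteq> E \<or> E \<subseteq> D"
  shows "closed_normal G T (\<Inter>\<D>) \<and> (\<Inter>\<D>) <#> L = K"
proof -
  have top: "topspace T = carrier G" and cs: "compact_space T"
    and cm: "continuous_map (prod_topology T T) T (\<lambda>p. fst p \<otimes> snd p)"
    using prof unfolding profinite_group_def by auto
  have nD: "D \<lhd> G" if "D \<in> \<D>" for D using D[OF that] closed_normal_def by blast
  have sub: "subgroup (\<Inter>\<D>) G" using subgroups_Inter[of \<D>] nD normal_imp_subgroup ne by blast
  have nI: "\<Inter>\<D> \<lhd> G" unfolding normal_inv_iff
  proof (intro conjI sub ballI)
    fix x h assume x: "x \<in> carrier G" and h: "h \<in> \<Inter>\<D>"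
    show "x \<otimes> h \<otimes> inv x \<in> \<Inter>\<D>"
    proof
      fix D assume "D \<in> \<D>"
      then show "x \<otimes> h \<otimes> inv x \<in> D" using normal.inv_op_closed2[OF nD[OF \<open>D \<in> \<D>\<close>] x] h by blast
    qed
  qed
  have cI: "closedin T (\<Inter>\<D>)" using closedin_Inter[OF ne] D unfolding closed_normal_def by blast
  have sL: "subgroup L G" using cL normal_imp_subgroup unfolding closed_normal_def by blast
  have "(\<Inter>\<D>) <#> L = K"
  proof
    obtain D0 where D0: "D0 \<in> \<D>" using ne by blast
    have "(\<Inter>\<D>) <#> L \<subseteq> D0 <#> L" unfolding set_mult_def using D0 by blast
    then show "(\<Inter>\<D>) <#> L \<subseteq> K" using D[OF D0] by simp
    show "K \<subseteq> (\<Inter>\<D>) <#> L"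
    proof
      fix k assume k: "k \<in> K"
      have kc: "k \<in> carrier G"
      proof -
        have "D0 <#> L \<subseteq> carrier G"
          using setmult_subset_G[of D0 L] D[OF D0] sL subgroup.subset normal_imp_subgroup
          unfolding closed_normal_def by metis
        then show ?thesis using D[OF D0] k by blast
      qed
      define kL where "kL = k <# L"
      have kLeq: "kL = (\<lambda>x. k \<otimes> x) ` L" unfolding kL_def l_coset_def by blast
      have clm: "continuous_map T T (\<lambda>x. k \<otimes> x)"
      proof -
        have "continuous_map T (prod_topology T T) (\<lambda>x. (k, x))"
          by (rule continuous_map_pairedI) (auto simp: top kc)
        then have "continuous_map T T ((\<lambda>p. fst p \<otimes> snd p) \<circ> (\<lambda>x. (k, x)))"
          using continuous_map_compose cm by blast
        then show ?thesis by (simp add: o_def)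
      qed
      have "compactin T L" using cL cs closedin_compact_space unfolding closed_normal_def by blast
      then have "compactin T kL" unfolding kLeq using image_compactin clm by blast
      then have ckL: "closedin T kL"
        using compactin_imp_closedin prof unfolding profinite_group_def by blast
      have meet: "D \<inter> kL \<noteq> {}" if "D \<in> \<D>" for D
      proof -
        from k D[OF that] obtain a l where a: "a \<in> D" and l: "l \<in> L" and kal: "k = a \<otimes> l"
          unfolding set_mult_def by blast
        have sD: "subgroup D G" using nD[OF that] normal_imp_subgroup by blast
        have ac: "a \<in> carrier G" using subgroup.mem_carrier[OF sD a] .
        have lc: "l \<in> carrier G" using subgroup.mem_carrier[OF sL l] .
        have "k \<otimes> inv l = a" using kal ac lc by (simp add: m_assoc)
        moreover have "inv l \<in> L" using subgroup.m_inv_closed[OF sL l] .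
        ultimately have "a \<in> kL" unfolding kL_def l_coset_def by blast
        then show ?thesis using a by blast
      qed
      define U where "U = (\<lambda>D. D \<inter> kL) ` \<D>"
      have "\<Inter>U \<noteq> {}"
      proof -
        have "\<forall>C\<in>U. closedin T C"
        proof
          fix C assume "C \<in> U"
          then obtain D' where D': "D' \<in> \<D>" "C = D' \<inter> kL" unfolding U_def by blast
          have "closedin T D'" using D[OF D'(1)] unfolding closed_normal_def by blast
          then show "closedin T C" unfolding D'(2) using closedin_Int ckL by blast
        qed
        moreover have "\<Inter>F \<noteq> {}" if FF: "finite F" "F \<subseteq> U" for F
        proof -
          obtain F' where F': "F' \<subseteq> \<D>" "finite F'" "F = (\<lambda>D. D \<inter> kL) ` F'"
            using finite_subset_image[OF FF(1) FF(2)[unfolded U_def]] by blast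
          show ?thesis
          proof (cases "F' = {}")
            case True then show ?thesis using F' by simp
          next
            case False
            have "subset.chain \<D> F'" unfolding subset_chain_def
            proof (intro conjI ballI F'(1))
              fix P1 Q1 assume "P1 \<in> F'" "Q1 \<in> F'"
              then show "P1 \<subseteq> Q1 \<or> Q1 \<subseteq> P1" using ch[of P1 Q1] F'(1) by (meson subsetD)
            qed
            then have "\<Inter>F' \<in> F'" using Inter_in_chain[OF F'(2) False] by blast
            then have "\<Inter>F' \<inter> kL \<noteq> {}" using meet[OF subsetD[OF F'(1)]] by simp
            moreover have "\<Inter>F = \<Inter>F' \<inter> kL" unfolding F'(3) using False by auto
            ultimately show ?thesis by simp
          qed
        qed
        ultimately show ?thesis using compact_space_fip[THEN iffD1, OF cs, rule_format, of U] by blast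
      qed
      then obtain z where z: "z \<in> \<Inter>U" by blast
      have zD: "z \<in> \<Inter>\<D>" using z unfolding U_def by blast
      obtain D0' where "D0' \<in> \<D>" using ne by blast
      then have "z \<in> kL" using z unfolding U_def by blast
      then obtain l where l: "l \<in> L" and zkl: "z = k \<otimes> l" unfolding kL_def l_coset_def by blast
      have lc: "l \<in> carrier G" using subgroup.mem_carrier[OF sL l] .
      have "z \<otimes> inv l = k" using zkl kc lc by (simp add: m_assoc)
      moreover have "inv l \<in> L" using subgroup.m_inv_closed[OF sL l] .
      ultimately show "k \<in> (\<Inter>\<D>) <#> L" unfolding set_mult_def using zD by blast
    qed
  qed
  then show ?thesis using nI cI unfolding closed_normal_def by blast
qed

lemma (in group) cancel_helper:
  "g \<in> carrier G \<Longrightarrow> x \<in> carrier G \<Longrightarrow> g \<otimes> (inv g \<otimes> x) = x"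
proof -
  assume a: "g \<in> carrier G" "x \<in> carrier G"
  then have "g \<otimes> (inv g \<otimes> x) = (g \<otimes> inv g) \<otimes> x" using m_assoc[of g "inv g" x] by simp
  then show ?thesis using a by simp
qed

lemma (in group) main_aux:
  fixes T :: "'a topology" and K L :: "'a set"
  assumes "profinite_group G T"
    and "just_infinite G T"
    and "chief_factor G T K L"
  shows "\<exists>A. critical_pair G T A (A \<inter> L) \<and> A <#> L = K
          \<and> ((G\<lparr>carrier := K\<rparr>) Mod L \<cong> (G\<lparr>carrier := A\<rparr>) Mod (A \<inter> L))
          \<and> centralizer_factor G K L = centralizer_factor G A (A \<inter> L)"
proof -
  from assms(3) have cK: "closed_normal G T K" and cL: "closed_normal G T L" and LK: "L \<subset> K"
    and nobetween: "\<And>N. closed_normal G T N \<Longrightarrow> L \<subset> N \<Longrightarrow> N \<subset> K \<Longrightarrow> False"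
    unfolding chief_factor_def by blast+
  have nK: "K \<lhd> G" and nL: "L \<lhd> G" using cK cL closed_normal_def by auto
  have sK: "subgroup K G" and sL: "subgroup L G" using nK nL normal_imp_subgroup by auto
  define P where "P A \<longleftrightarrow> closed_normal G T A \<and> A <#> L = K" for A
  have PK: "P K" unfolding P_def using cK set_mult_sub_id[OF sK sL] LK by auto
  have Psub: "A \<subseteq> carrier G" if "P A" for A
    using that subgroup.subset normal_imp_subgroup unfolding P_def closed_normal_def by blast
  define \<A> where "\<A> = (\<lambda>A. carrier G - A) ` {A. P A}"
  have "\<exists>M\<in>\<A>. \<forall>Z1\<in>\<A>. M \<subseteq> Z1 \<longrightarrow> Z1 = M"
  proof (rule subset_Zorn_nonempty)
    show "\<A> \<noteq> {}" using PK unfolding \<A>_def by blast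
    fix \<C> assume neC: "\<C> \<noteq> {}" and chC: "subset.chain \<A> \<C>"
    have CA: "\<C> \<subseteq> \<A>" and cmp: "\<And>P1 Q1. P1 \<in> \<C> \<Longrightarrow> Q1 \<in> \<C> \<Longrightarrow> P1 \<subseteq> Q1 \<or> Q1 \<subseteq> P1"
      using chC unfolding subset_chain_def by blast+
    define \<D> where "\<D> = {A. P A \<and> carrier G - A \<in> \<C>}"
    have C_eq: "\<C> = (\<lambda>A. carrier G - A) ` \<D>"
    proof
      show "\<C> \<subseteq> (\<lambda>A. carrier G - A) ` \<D>"
      proof
        fix C assume C: "C \<in> \<C>"
        then obtain A where "P A" "C = carrier G - A" using CA unfolding \<A>_def by blast
        then show "C \<in> (\<lambda>A. carrier G - A) ` \<D>" unfolding \<D>_def using C by blast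
      qed
      show "(\<lambda>A. carrier G - A) ` \<D> \<subseteq> \<C>" unfolding \<D>_def by blast
    qed
    have neD: "\<D> \<noteq> {}" using neC C_eq by blast
    have chD: "D \<subseteq> E \<or> E \<subseteq> D" if "D \<in> \<D>" "E \<in> \<D>" for D E
    proof -
      have "D \<subseteq> carrier G" "E \<subseteq> carrier G" using that Psub unfolding \<D>_def by blast+
      moreover have "carrier G - D \<subseteq> carrier G - E \<or> carrier G - E \<subseteq> carrier G - D"
        using cmp that unfolding \<D>_def by blast
      ultimately show ?thesis by blast
    qed
    have "closed_normal G T (\<Inter>\<D>) \<and> (\<Inter>\<D>) <#> L = K"
      using chain_Inter_P[OF assms(1) cL neD _ chD] unfolding \<D>_def P_def by blast
    then have PI: "P (\<Inter>\<D>)" unfolding P_def by blast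
    have "\<Union>\<C> = carrier G - \<Inter>\<D>" unfolding C_eq using neD by blast
    then show "\<Union>\<C> \<in> \<A>" using PI unfolding \<A>_def by blast
  qed
  then obtain M where M: "M \<in> \<A>" and maxM: "\<And>Z1. Z1 \<in> \<A> \<Longrightarrow> M \<subseteq> Z1 \<Longrightarrow> Z1 = M" by blast
  obtain A where PA: "P A" and MA: "M = carrier G - A" using M unfolding \<A>_def by blast
  have minA: "B = A" if PB: "P B" and BA: "B \<subseteq> A" for B
  proof -
    have "carrier G - B \<in> \<A>" using PB unfolding \<A>_def by blast
    moreover have "M \<subseteq> carrier G - B" using MA BA by blast
    ultimately have "carrier G - B = carrier G - A" using maxM MA by blast
    then show ?thesis using Psub[OF PB] Psub[OF PA] by blast
  qed
  have cA: "closed_normal G T A" and AL: "A <#> L = K" using PA P_def by auto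
  have nA: "A \<lhd> G" using cA closed_normal_def by auto
  have sA: "subgroup A G" using nA normal_imp_subgroup by auto
  have ALsub: "A \<subseteq> K"
  proof
    fix x assume x: "x \<in> A"
    then have "x = x \<otimes> \<one>" using sA subgroup.mem_carrier by force
    moreover have "\<one> \<in> L" using sL subgroup.one_closed by blast
    ultimately show "x \<in> K" using x AL unfolding set_mult_def by blast
  qed
  have notAL: "\<not> A \<subseteq> L"
  proof
    assume "A \<subseteq> L"
    then have "A <#> L \<subseteq> L" unfolding set_mult_def using subgroup.m_closed[OF sL] by blast
    then show False using AL LK by auto
  qed
  have nAL: "A \<inter> L \<lhd> G"
  proof -
    have "subgroup (A \<inter> L) G" using subgroups_Inter[of "{A, L}"] sA sL by auto
    then show ?thesis unfolding normal_inv_iff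
      using normal.inv_op_closed2[OF nA] normal.inv_op_closed2[OF nL] by blast
  qed
  have cAL: "closed_normal G T (A \<inter> L)"
    using nAL cA cL closedin_Int unfolding closed_normal_def by blast
  have crit: "N \<subseteq> A \<inter> L" if cN: "closed_normal G T N" and NA: "N \<subset> A" for N
  proof -
    have nN: "N \<lhd> G" using cN closed_normal_def by auto
    have sN: "subgroup N G" using nN normal_imp_subgroup by auto
    have cNL: "closed_normal G T (N <#> L)" unfolding closed_normal_def
      using normal_subgroup_set_mult_closed[OF nN nL] closed_set_mult[OF assms(1)] cN cL
      unfolding closed_normal_def by blast
    have LNL: "L \<subseteq> N <#> L"
    proof
      fix x assume x: "x \<in> L"
      then have "x = \<one> \<otimes> x" using sL subgroup.mem_carrier by force
      moreover have "\<one> \<in> N" using sN subgroup.one_closed by blast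
      ultimately show "x \<in> N <#> L" using x unfolding set_mult_def by blast
    qed
    have NLK: "N <#> L \<subseteq> K" using NA AL unfolding set_mult_def by blast
    have "N <#> L = L \<or> N <#> L = K" using nobetween[OF cNL] LNL NLK by blast
    then show ?thesis
    proof
      assume NL: "N <#> L = L"
      have "N \<subseteq> N <#> L"
      proof
        fix x assume x: "x \<in> N"
        then have "x = x \<otimes> \<one>" using sN subgroup.mem_carrier by force
        moreover have "\<one> \<in> L" using sL subgroup.one_closed by blast
        ultimately show "x \<in> N <#> L" using x unfolding set_mult_def by blast
      qed
      then show ?thesis using NA NL by auto
    next
      assume "N <#> L = K"
      then have PN: "P N" using cN P_def by auto
      have "N = A" using minA[OF PN] NA by blast
      then show ?thesis using NA by blast
    qed
  qed
  have critp: "critical_pair G T A (A \<inter> L)"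
    unfolding critical_pair_def using cA cAL notAL crit by blast
  interpret si: second_isomorphism_grp L G A
    unfolding second_isomorphism_grp_def second_isomorphism_grp_axioms_def using nL sA by blast
  have LA: "L <#> A = K" using commut_normal[OF sA nL] AL by simp
  have iso1: "(G\<lparr>carrier := A\<rparr>) Mod (A \<inter> L) \<cong> (G\<lparr>carrier := K\<rparr>) Mod L"
    using is_isoI[OF si.normal_intersection_quotient_isom] LA by (simp add: Int_commute)
  have grpq: "group ((G\<lparr>carrier := A\<rparr>) Mod (A \<inter> L))"
    using normal.factorgroup_is_group[OF si.normal_subgrp_intersection_normal] .
  have iso: "(G\<lparr>carrier := K\<rparr>) Mod L \<cong> (G\<lparr>carrier := A\<rparr>) Mod (A \<inter> L)"
    using group.iso_sym[OF grpq iso1] .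
  have cent: "centralizer_factor G K L = centralizer_factor G A (A \<inter> L)"
  proof (rule equalityI; rule subsetI)
    fix g assume "g \<in> centralizer_factor G K L"
    then have g: "g \<in> carrier G" and H: "\<forall>a\<in>K. inv g \<otimes> inv a \<otimes> g \<otimes> a \<in> L"
      unfolding centralizer_factor_def by auto
    show "g \<in> centralizer_factor G A (A \<inter> L)" unfolding centralizer_factor_def
    proof (intro CollectI conjI ballI g IntI)
      fix a assume a: "a \<in> A"
      show "inv g \<otimes> inv a \<otimes> g \<otimes> a \<in> L" using H ALsub a by auto
      have ac: "a \<in> carrier G" using subgroup.mem_carrier[OF sA a] .
      have "inv g \<otimes> inv a \<otimes> inv (inv g) \<in> A"
        using normal.inv_op_closed2[OF nA, of "inv g" "inv a"] g a subgroup.m_inv_closed[OF sA] by simp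
      then have "inv g \<otimes> inv a \<otimes> g \<in> A" using g by simp
      then show "inv g \<otimes> inv a \<otimes> g \<otimes> a \<in> A" using subgroup.m_closed[OF sA] a by blast
    qed
  next
    fix g assume "g \<in> centralizer_factor G A (A \<inter> L)"
    then have g: "g \<in> carrier G" and H: "\<forall>a\<in>A. inv g \<otimes> inv a \<otimes> g \<otimes> a \<in> A \<inter> L"
      unfolding centralizer_factor_def by auto
    show "g \<in> centralizer_factor G K L" unfolding centralizer_factor_def
    proof (intro CollectI conjI ballI g)
      fix k assume "k \<in> K"
      then obtain a l where a: "a \<in> A" and l: "l \<in> L" and k: "k = a \<otimes> l"
        using AL unfolding set_mult_def by blast
      have ac: "a \<in> carrier G" using subgroup.mem_carrier[OF sA a] .
      have lc: "l \<in> carrier G" using subgroup.mem_carrier[OF sL l] .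
      have e: "inv g \<otimes> inv k \<otimes> g \<otimes> k
          = (inv g \<otimes> inv l \<otimes> g) \<otimes> (inv g \<otimes> inv a \<otimes> g \<otimes> a) \<otimes> l"
        using g ac lc by (simp add: k inv_mult_group m_assoc cancel_helper)
      have "inv g \<otimes> inv l \<otimes> inv (inv g) \<in> L"
        using normal.inv_op_closed2[OF nL, of "inv g" "inv l"] g l subgroup.m_inv_closed[OF sL] by simp
      then have m1: "inv g \<otimes> inv l \<otimes> g \<in> L" using g by simp
      have m2: "inv g \<otimes> inv a \<otimes> g \<otimes> a \<in> L" using H a by blast
      show "inv g \<otimes> inv k \<otimes> g \<otimes> k \<in> L"
        unfolding e using m1 m2 l subgroup.m_closed[OF sL] by blast
    qed
  qed
  show ?thesis using critp AL iso cent by blast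
qed

theorem lemma11:
  fixes G :: "('a, 'b) monoid_scheme" and T :: "'a topology" and K L :: "'a set"
  assumes "profinite_group G T"
    and "just_infinite G T"
    and "chief_factor G T K L"
  shows "\<exists>A. critical_pair G T A (A \<inter> L) \<and> A <#>\<^bsub>G\<^esub> L = K
          \<and> ((G\<lparr>carrier := K\<rparr>) Mod L \<cong> (G\<lparr>carrier := A\<rparr>) Mod (A \<inter> L))
          \<and> centralizer_factor G K L = centralizer_factor G A (A \<inter> L)"
proof -
  have grp: "group G" using assms(1) unfolding profinite_group_def by auto
  show ?thesis using group.main_aux[OF grp assms] .
qed

end
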